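(* Let $K$ be a finite field of odd characteristic, $\omega\in K$ a non-square, and $d:V\times V\to K$ a non-degenerate symmetric bilinear form with $n=\dim V$ and $\operatorname{disc}d=[\omega^c]$, $c\in\{0,1\}$. Then the set of addresses of orthogonal bases of $d$ is $\{(n-(c+2k):c+2k) : 0\le k\le\frac{n-c}{2}\}$. In particular there are $1+\lfloor\frac{n-c}{2}\rfloor$ addresses.
   Context: The discriminant $\operatorname{disc}d$ is the class modulo $(K^\times)^2$ of the determinant of the Gram matrix of $d$ in any basis; $[a]$ denotes $a(K^\times)^2$. An orthogonal basis of $d$ is a basis $\{x_1,\dots,x_n\}$ of $V$ with $d(x_i,x_j)=0$ for $i\neq j$. Its address is $(n-s:s)$, where $s$ is the number of $i$ with $d(x_i,x_i)$ a non-square in $K$. *)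

theory Defs
  imports Main "Jordan_Normal_Form.Determinant"
begin

text \<open>Squares in the field (including 0; on non-zero elements this is membership in (K^x)^2).\<close>
definition is_square :: "'a::field \<Rightarrow> bool" where
  "is_square a \<longleftrightarrow> (\<exists>y. a = y ^ 2)"

definition bilinear_form :: "('a::field \<Rightarrow> 'v::ab_group_add \<Rightarrow> 'v) \<Rightarrow> ('v \<Rightarrow> 'v \<Rightarrow> 'a) \<Rightarrow> bool" where
  "bilinear_form scale d \<longleftrightarrow>
     (\<forall>x y z. d (x + y) z = d x z + d y z) \<and>
     (\<forall>x y z. d x (y + z) = d x y + d x z) \<and>
     (\<forall>a x y. d (scale a x) y = a * d x y) \<and>
     (\<forall>a x y. d x (scale a y) = a * d x y)"

definition symmetric_form :: "('v \<Rightarrow> 'v \<Rightarrow> 'a) \<Rightarrow> bool" where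
  "symmetric_form d \<longleftrightarrow> (\<forall>x y. d x y = d y x)"

definition nondegenerate_form :: "('v::zero \<Rightarrow> 'v \<Rightarrow> 'a::zero) \<Rightarrow> bool" where
  "nondegenerate_form d \<longleftrightarrow> (\<forall>x. (\<forall>y. d x y = 0) \<longrightarrow> x = 0)"

definition is_basis_list :: "('a::field \<Rightarrow> 'v::ab_group_add \<Rightarrow> 'v) \<Rightarrow> 'v list \<Rightarrow> bool" where
  "is_basis_list scale bs \<longleftrightarrow> distinct bs \<and> \<not> module.dependent scale (set bs)
      \<and> module.span scale (set bs) = UNIV"

definition gram_det :: "('v \<Rightarrow> 'v \<Rightarrow> 'a::comm_ring_1) \<Rightarrow> 'v list \<Rightarrow> 'a" where
  "gram_det d bs = det (mat (length bs) (length bs) (\<lambda>(i, j). d (bs ! i) (bs ! j)))"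

text \<open>disc d = [a]: the Gram determinant (in some, equivalently any, basis) lies in a (K^x)^2.\<close>
definition disc_is :: "('a::field \<Rightarrow> 'v::ab_group_add \<Rightarrow> 'v) \<Rightarrow> ('v \<Rightarrow> 'v \<Rightarrow> 'a) \<Rightarrow> 'a \<Rightarrow> bool" where
  "disc_is scale d a \<longleftrightarrow>
     (\<exists>bs. is_basis_list scale bs \<and> (\<exists>t. t \<noteq> 0 \<and> gram_det d bs = a * t ^ 2))"

definition orthogonal_basis :: "('a::field \<Rightarrow> 'v::ab_group_add \<Rightarrow> 'v) \<Rightarrow> ('v \<Rightarrow> 'v \<Rightarrow> 'a) \<Rightarrow> 'v set \<Rightarrow> bool" where
  "orthogonal_basis scale d B \<longleftrightarrow>
     \<not> module.dependent scale B \<and> module.span scale B = UNIV \<and>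
     (\<forall>x\<in>B. \<forall>y\<in>B. x \<noteq> y \<longrightarrow> d x y = 0)"

definition address :: "('a::field \<Rightarrow> 'v::ab_group_add \<Rightarrow> 'v) \<Rightarrow> ('v \<Rightarrow> 'v \<Rightarrow> 'a) \<Rightarrow> 'v set \<Rightarrow> nat \<times> nat" where
  "address scale d B =
     (let s = card {x\<in>B. \<not> is_square (d x x)} in (vector_space.dim scale UNIV - s, s))"

end

theory Submission
  imports Defs
begin


lemma sq_nonzero_card:
  assumes two: "(2::'a::{field,finite}) \<noteq> 0"
  shows "card (UNIV - {0::'a}) = 2 * card {y::'a. y \<noteq> 0 \<and> is_square y}"
proof -
  let ?S = "{y::'a. y \<noteq> 0 \<and> is_square y}"
  let ?A = "\<lambda>s. {x::'a. x^2 = s}"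
  have eq: "UNIV - {0::'a} = (\<Union>s\<in>?S. ?A s)"
    by (auto simp: is_square_def)
  have c2: "card (?A s) = 2" if "s \<in> ?S" for s
  proof -
    from that obtain r where r: "s = r^2" "r \<noteq> 0" by (auto simp: is_square_def)
    have "?A s = {r, -r}"
    proof -
      have "x^2 = r^2 \<longleftrightarrow> x = r \<or> x = -r" for x :: 'a
        by (metis power2_eq_iff)
      then show ?thesis using r by auto
    qed
    moreover have "r \<noteq> -r"
    proof
      assume "r = -r"
      then have "2 * r = 0" by (metis add_eq_0_iff mult_2)
      with two r show False by simp
    qed
    ultimately show ?thesis by simp
  qed
  have "card (UNIV - {0::'a}) = (\<Sum>s\<in>?S. card (?A s))"
    unfolding eq by (rule card_UN_disjoint) auto
  also have "\<dots> = (\<Sum>s\<in>?S. 2)" using c2 by (intro sum.cong) auto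
  finally show ?thesis by simp
qed

lemma nonsq_mult_nonsq:
  assumes two: "(2::'a::{field,finite}) \<noteq> 0"
    and a: "\<not> is_square (a::'a)" and b: "\<not> is_square b"
  shows "is_square (a * b)"
proof -
  let ?S = "{y::'a. y \<noteq> 0 \<and> is_square y}"
  let ?N = "{y::'a. \<not> is_square y}"
  have a0: "a \<noteq> 0" using a by (auto simp: is_square_def)
  have part: "UNIV - {0::'a} = ?S \<union> ?N" by (auto simp: is_square_def)
  have "card (UNIV - {0::'a}) = card ?S + card ?N"
    unfolding part by (rule card_Un_disjoint) auto
  with sq_nonzero_card[OF two] have cN: "card ?N = card ?S" by simp
  have sub: "(\<lambda>s. a * s) ` ?S \<subseteq> ?N"
  proof safe
    fix s assume s: "s \<noteq> 0" "is_square s" "is_square (a * s)"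
    then obtain r y where "s = r^2" "a * s = y^2" by (auto simp: is_square_def)
    then have "a = (y / r)^2" using s by (simp add: power_divide field_simps)
    with a show False by (auto simp: is_square_def)
  qed
  have "card ((\<lambda>s. a * s) ` ?S) = card ?S"
    by (rule card_image) (auto simp: inj_on_def a0)
  then have "(\<lambda>s. a * s) ` ?S = ?N"
    using sub cN by (intro card_subset_eq) auto
  then have "b \<in> (\<lambda>s. a * s) ` ?S" using b by auto
  then obtain s r where "b = a * s" "s = r^2" by (auto simp: is_square_def)
  then have "a * b = (a * r)^2" by (simp add: power2_eq_square)
  then show ?thesis by (auto simp: is_square_def)
qed

lemma sq_mult_iff:
  assumes two: "(2::'a::{field,finite}) \<noteq> 0" and p: "(p::'a) \<noteq> 0" and q: "q \<noteq> 0"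
  shows "is_square (p * q) \<longleftrightarrow> (is_square p \<longleftrightarrow> is_square q)"
proof -
  have sq: "is_square (p*q)" if "is_square p" "is_square q"
    using that unfolding is_square_def by (metis power_mult_distrib)
  have nsq: "\<not> is_square (u * w)" if "is_square u" "\<not> is_square w" "u \<noteq> 0" for u w :: 'a
  proof
    assume "is_square (u*w)"
    then obtain y where y: "u * w = y^2" by (auto simp: is_square_def)
    from that(1) obtain r where r: "u = r^2" by (auto simp: is_square_def)
    from r y have "u = r^2" "u * w = y^2" by auto
    then have "w = (y / r)^2" using that by (simp add: power_divide field_simps)
    with that show False by (auto simp: is_square_def)
  qed
  show ?thesis
    using sq nsq[of p q] nsq[of q p] nonsq_mult_nonsq[OF two, of p q] p q
    by (metis mult.commute)
qed

lemma prod_sq_parity: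
  assumes two: "(2::'a::{field,finite}) \<noteq> 0" and "finite B"
    and "\<forall>x\<in>B. (f x::'a) \<noteq> 0"
  shows "is_square (\<Prod>x\<in>B. f x) \<longleftrightarrow> even (card {x\<in>B. \<not> is_square (f x)})"
  using assms(2,3)
proof (induction B rule: finite_induct)
  case empty
  then show ?case by (auto simp: is_square_def intro: exI[of _ 1])
next
  case (insert x F)
  have ne: "(\<Prod>x\<in>F. f x) \<noteq> 0" using insert by auto
  have fx: "f x \<noteq> 0" using insert by auto
  have "{y\<in>insert x F. \<not> is_square (f y)} =
        (if is_square (f x) then {y\<in>F. \<not> is_square (f y)} else insert x {y\<in>F. \<not> is_square (f y)})"
    by auto
  moreover have "finite {y\<in>F. \<not> is_square (f y)}" using insert by auto
  moreover have "x \<notin> {y\<in>F. \<not> is_square (f y)}" using insert by auto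
  ultimately show ?case
    using insert sq_mult_iff[OF two fx ne] by auto
qed

lemma two_squares_sum:
  assumes two: "(2::'a::{field,finite}) \<noteq> 0" and a: "(a::'a) \<noteq> 0" and b: "b \<noteq> 0"
  shows "\<exists>x y. a * x^2 + b * y^2 = t"
proof -
  let ?S = "{y::'a. y \<noteq> 0 \<and> is_square y}"
  let ?Q = "{x^2 | x::'a. True}"
  have Q: "?Q = insert 0 ?S" by (auto simp: is_square_def)
  have cQ: "card ?Q = card ?S + 1" unfolding Q by simp
  have cU: "card (UNIV::'a set) = 2 * card ?S + 1"
  proof -
    have "card (UNIV::'a set) = card (UNIV - {0::'a}) + 1"
      by (metis Suc_eq_plus1 card_Suc_Diff1 finite_UNIV UNIV_I)
    then show ?thesis using sq_nonzero_card[OF two] by simp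
  qed
  let ?A = "(\<lambda>z. a * z) ` ?Q"
  let ?B = "(\<lambda>z. t - b * z) ` ?Q"
  have cA: "card ?A = card ?S + 1"
    using cQ by (subst card_image) (auto simp: inj_on_def a)
  have cB: "card ?B = card ?S + 1"
    using cQ by (subst card_image) (auto simp: inj_on_def b)
  have "?A \<inter> ?B \<noteq> {}"
  proof
    assume e: "?A \<inter> ?B = {}"
    have "card (?A \<union> ?B) = card ?A + card ?B"
      using e by (intro card_Un_disjoint) auto
    moreover have "card (?A \<union> ?B) \<le> card (UNIV::'a set)" by (rule card_mono) auto
    ultimately show False using cA cB cU by simp
  qed
  then obtain x y where "a * x^2 = t - b * y^2" by auto
  then have "a * x^2 + b * y^2 = t" by (simp add: algebra_simps)
  then show ?thesis by blast
qed



locale ofq = finite_dimensional_vector_space scale Basis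
  for scale :: "'a::{field,finite} \<Rightarrow> 'v::ab_group_add \<Rightarrow> 'v" and Basis :: "'v set" +
  fixes d :: "'v \<Rightarrow> 'v \<Rightarrow> 'a"
  assumes two: "(2::'a) \<noteq> 0" and bil: "bilinear_form scale d"
    and dsym: "symmetric_form d" and nd: "nondegenerate_form d"
begin

lemma dadd1[simp]: "d (x + y) z = d x z + d y z"
  and dadd2[simp]: "d x (y + z) = d x y + d x z"
  and dscale1[simp]: "d (scale a x) y = a * d x y"
  and dscale2[simp]: "d x (scale a y) = a * d x y"
  using bil unfolding bilinear_form_def by auto

lemma dsym': "d x y = d y x" using dsym unfolding symmetric_form_def by auto

lemma dzero1[simp]: "d 0 y = 0"
  using dscale1[of 0 0 y] by simp
lemma dzero2[simp]: "d y 0 = 0"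
  using dscale2[of y 0 0] by simp

lemma dneg1[simp]: "d (- x) y = - d x y"
  using dadd1[of x "-x" y] dzero1 by (simp add: eq_neg_iff_add_eq_0 add.commute)
lemma dneg2[simp]: "d y (- x) = - d y x"
  using dadd2[of y x "-x"] dzero2 by (simp add: eq_neg_iff_add_eq_0 add.commute)
lemma ddiff1[simp]: "d (x - z) y = d x y - d z y"
proof -
  have "d (x - z) y = d (x + (-z)) y" by (simp only: diff_conv_add_uminus)
  also have "\<dots> = d x y - d z y" by (simp only: dadd1 dneg1) simp
  finally show ?thesis .
qed
lemma ddiff2[simp]: "d y (x - z) = d y x - d y z"
proof -
  have "d y (x - z) = d y (x + (-z))" by (simp only: diff_conv_add_uminus)
  also have "\<dots> = d y x - d y z" by (simp only: dadd2 dneg2) simp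
  finally show ?thesis .
qed

lemma orth_span: assumes "\<forall>z\<in>S. d x z = 0" "y \<in> span S" shows "d x y = 0"
proof -
  have "subspace {y. d x y = 0}" unfolding subspace_def by simp
  then show ?thesis using span_induct[OF assms(2), of "\<lambda>y. d x y = 0"] assms(1) by auto
qed

lemma orth_indep:
  assumes orth: "\<forall>x\<in>S. \<forall>y\<in>S. x \<noteq> y \<longrightarrow> d x y = 0" and an: "\<forall>x\<in>S. d x x \<noteq> 0"
  shows "independent S"
proof
  assume "dependent S"
  then obtain a where a: "a \<in> S" "a \<in> span (S - {a})" unfolding dependent_def by blast
  have "d a a = 0" by (rule orth_span[OF _ a(2)]) (use orth a(1) in auto)
  with an a show False by auto
qed

lemma orth_aniso:
  assumes orth: "\<forall>x\<in>B. \<forall>y\<in>B. x \<noteq> y \<longrightarrow> d x y = 0" and sp: "span B = UNIV"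
    and ind: "independent B" and x: "x \<in> B"
  shows "d x x \<noteq> 0"
proof
  assume "d x x = 0"
  then have "\<forall>z\<in>B. d x z = 0" using orth x by auto
  then have "\<forall>y. d x y = 0" using orth_span[of B x] sp by auto
  then have "x = 0" using nd unfolding nondegenerate_form_def by auto
  with ind x show False using dependent_zero by blast
qed

lemma orth_exists_sub:
  "subspace W \<Longrightarrow> (\<forall>x\<in>W. (\<forall>y\<in>W. d x y = 0) \<longrightarrow> x = 0) \<Longrightarrow>
   \<exists>B. B \<subseteq> W \<and> independent B \<and> span B = W \<and> (\<forall>x\<in>B. \<forall>y\<in>B. x \<noteq> y \<longrightarrow> d x y = 0)"
proof (induction "dim W" arbitrary: W rule: less_induct)
  case less
  show ?case
  proof (cases "W \<subseteq> {0}")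
    case True
    then have "W = {0}" using less.prems(1) subspace_0 by blast
    then show ?thesis by (intro exI[of _ "{}"]) (auto simp: independent_empty)
  next
    case False
    have "\<exists>v\<in>W. d v v \<noteq> 0"
    proof (rule ccontr)
      assume "\<not> ?thesis"
      then have z: "\<forall>v\<in>W. d v v = 0" by auto
      have "d x y = 0" if "x \<in> W" "y \<in> W" for x y
      proof -
        have "x + y \<in> W" using less.prems(1) that subspace_add by blast
        then have s0: "d (x+y) (x+y) = 0" using z by blast
        have xx: "d x x = 0" "d y y = 0" using z that by auto
        have "2 * d x y = d x y + d x y" by (rule mult_2)
        also have "\<dots> = d x x + d y x + (d x y + d y y)"
          using xx dsym'[of y x] by (simp only: add_0_left add_0_right)
        also have "\<dots> = d (x+y) (x+y)" by (simp only: dadd1 dadd2)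
        also have "\<dots> = 0" by (rule s0)
        finally have "2 * d x y = 0" .
        then show ?thesis using two by simp
      qed
      then have "W \<subseteq> {0}" using less.prems(2) by auto
      with False show False by simp
    qed
    then obtain v where v: "v \<in> W" "d v v \<noteq> 0" by blast
    define W' where "W' = {x\<in>W. d v x = 0}"
    have sW': "subspace W'"
      using less.prems(1) unfolding subspace_def W'_def by auto
    have ndW': "\<forall>x\<in>W'. (\<forall>y\<in>W'. d x y = 0) \<longrightarrow> x = 0"
    proof (intro ballI impI)
      fix x assume x: "x \<in> W'" and h: "\<forall>y\<in>W'. d x y = 0"
      have "d x z = 0" if z: "z \<in> W" for z
      proof -
        define k where "k = d v z / d v v"
        have "z - scale k v \<in> W'"
        proof -
          have "z - scale k v \<in> W" using z v less.prems(1) subspace_diff subspace_scale by blast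
          moreover have "d v (z - scale k v) = 0" using v unfolding k_def by simp
          ultimately show ?thesis unfolding W'_def by blast
        qed
        then have "d x (z - scale k v) = 0" using h by auto
        moreover have "d x v = 0" using x dsym'[of x v] unfolding W'_def by auto
        moreover have "d x (z - scale k v) = d x z - k * d x v" by simp
        ultimately show ?thesis by simp
      qed
      then show "x = 0" using less.prems(2) x unfolding W'_def by auto
    qed
    have "span W' = W'" using sW' span_eq_iff by blast
    moreover have "span W = W" using less.prems(1) span_eq_iff by blast
    moreover have "W' \<subset> W" using v unfolding W'_def by auto
    ultimately have "span W' \<subset> span W" by (simp only:)
    then have "dim W' < dim W" by (rule dim_psubset)
    from less.hyps[OF this sW' ndW'] obtain B' where
      B': "B' \<subseteq> W'" "independent B'" "span B' = W'" "\<forall>x\<in>B'. \<forall>y\<in>B'. x \<noteq> y \<longrightarrow> d x y = 0"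
      by blast
    show ?thesis
    proof (intro exI[of _ "insert v B'"] conjI)
      show "insert v B' \<subseteq> W" using B'(1) v unfolding W'_def by auto
      have "v \<notin> span B'" using B'(3) v unfolding W'_def by auto
      then show "independent (insert v B')"
        using B'(2) by (rule independent_insertI)
      show "span (insert v B') = W"
      proof
        show "span (insert v B') \<subseteq> W"
          using B'(1) v less.prems(1) unfolding W'_def by (intro span_minimal) auto
        show "W \<subseteq> span (insert v B')"
        proof
          fix z assume z: "z \<in> W"
          define k where "k = d v z / d v v"
          have "z - scale k v \<in> W'"
          proof -
            have "z - scale k v \<in> W" using z v less.prems(1) subspace_diff subspace_scale by blast
            moreover have "d v (z - scale k v) = 0" using v unfolding k_def by simp
            ultimately show ?thesis unfolding W'_def by blast
          qed
          then show "z \<in> span (insert v B')" using B'(3) span_breakdown_eq by blast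
        qed
      qed
      show "\<forall>x\<in>insert v B'. \<forall>y\<in>insert v B'. x \<noteq> y \<longrightarrow> d x y = 0"
      proof (intro ballI impI)
        fix x y assume xy: "x \<in> insert v B'" "y \<in> insert v B'" "x \<noteq> y"
        have vB: "\<forall>y\<in>B'. d v y = 0" using B'(1) unfolding W'_def by auto
        show "d x y = 0"
        proof (cases "x = v")
          case True then show ?thesis using xy vB by auto
        next
          case False
          then have x: "x \<in> B'" using xy by auto
          show ?thesis
          proof (cases "y = v")
            case True then show ?thesis using x vB dsym'[of x v] by simp
          next
            case False then show ?thesis using x xy B'(4) by auto
          qed
        qed
      qed
    qed
  qed
qed


definition orthb :: "'v set \<Rightarrow> bool" where
  "orthb B \<longleftrightarrow> independent B \<and> span B = UNIV \<and> (\<forall>x\<in>B. \<forall>y\<in>B. x \<noteq> y \<longrightarrow> d x y = 0)"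

definition nsq :: "'v set \<Rightarrow> nat" where
  "nsq B = card {x\<in>B. \<not> is_square (d x x)}"

lemma orthb_card: "orthb B \<Longrightarrow> finite B \<and> card B = dim (UNIV::'v set)"
  unfolding orthb_def using finiteI_independent basis_card_eq_dim[of B UNIV] by auto

lemma orthb_aniso: "orthb B \<Longrightarrow> x \<in> B \<Longrightarrow> d x x \<noteq> 0"
  unfolding orthb_def using orth_aniso by blast

lemma nsq_insert: "finite R \<Longrightarrow> v \<notin> R \<Longrightarrow>
  nsq (insert v R) = nsq R + (if is_square (d v v) then 0 else 1)"
proof -
  assume f: "finite R" and v: "v \<notin> R"
  have e: "{x\<in>insert v R. \<not> is_square (d x x)} =
     (if is_square (d v v) then {x\<in>R. \<not> is_square (d x x)} else insert v {x\<in>R. \<not> is_square (d x x)})"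
    by auto
  show ?thesis unfolding nsq_def e using f v by auto
qed

lemma nsq_le: "finite B \<Longrightarrow> nsq B \<le> card B"
  unfolding nsq_def by (rule card_mono) auto

lemma orthb_exists: "\<exists>B. orthb B"
proof -
  have "subspace (UNIV::'v set)" by (rule subspace_UNIV)
  moreover have "\<forall>x\<in>UNIV. (\<forall>y\<in>UNIV. d x y = 0) \<longrightarrow> x = 0"
    using nd unfolding nondegenerate_form_def by auto
  ultimately show ?thesis using orth_exists_sub unfolding orthb_def by blast
qed

lemma swap:
  assumes B: "orthb B" and e: "e1 \<in> B" "e2 \<in> B" "e1 \<noteq> e2" and t: "t \<noteq> 0"
  shows "\<exists>v w. orthb (insert v (insert w (B - {e1, e2}))) \<and> v \<notin> B - {e1, e2}
     \<and> w \<notin> B - {e1, e2} \<and> v \<noteq> w \<and> d v v = t \<and> d w w = d e1 e1 * d e2 e2 * t"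
proof -
  define a where "a = d e1 e1"
  define b where "b = d e2 e2"
  have a0: "a \<noteq> 0" and b0: "b \<noteq> 0" using orthb_aniso[OF B] e unfolding a_def b_def by auto
  obtain x y where xy: "a * x^2 + b * y^2 = t" using two_squares_sum[OF two a0 b0] by blast
  have orth: "\<forall>x\<in>B. \<forall>y\<in>B. x \<noteq> y \<longrightarrow> d x y = 0" using B unfolding orthb_def by auto
  have e12: "d e1 e2 = 0" "d e2 e1 = 0" using orth e by auto
  define v where "v = scale x e1 + scale y e2"
  define w where "w = scale (-(y*b)) e1 + scale (x*a) e2"
  define R where "R = B - {e1, e2}"
  define B' where "B' = insert v (insert w R)"
  have dvv: "d v v = t" unfolding v_def using e12 xy
    by (simp add: a_def[symmetric] b_def[symmetric] power2_eq_square algebra_simps)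
  have dww: "d w w = a * b * t" unfolding w_def using e12 xy[symmetric]
    by (simp add: a_def[symmetric] b_def[symmetric] power2_eq_square algebra_simps)
  have dvw: "d v w = 0" "d w v = 0" unfolding w_def v_def using e12
    by (simp_all add: a_def[symmetric] b_def[symmetric] algebra_simps)
  have zR: "d z v = 0 \<and> d v z = 0 \<and> d z w = 0 \<and> d w z = 0" if z: "z \<in> R" for z
  proof -
    have "d z e1 = 0" "d z e2 = 0" "d e1 z = 0" "d e2 z = 0" using z orth e unfolding R_def by auto
    then show ?thesis unfolding v_def w_def by simp
  qed
  have abt: "a * b * t \<noteq> 0" using a0 b0 t by simp
  have vR: "v \<notin> R" using zR[of v] dvv t by auto
  have wR: "w \<notin> R" using zR[of w] dww abt by auto
  have vw: "v \<noteq> w" using dvw dvv t by auto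
  have orthB': "\<forall>x\<in>B'. \<forall>y\<in>B'. x \<noteq> y \<longrightarrow> d x y = 0"
  proof (intro ballI impI)
    fix p q assume p: "p \<in> B'" and q: "q \<in> B'" and pq: "p \<noteq> q"
    show "d p q = 0"
    proof (cases "p = v \<or> p = w")
      case True
      then show ?thesis using q pq dvw zR unfolding B'_def by auto
    next
      case False
      then have pR: "p \<in> R" using p unfolding B'_def by auto
      show ?thesis
      proof (cases "q = v \<or> q = w")
        case True then show ?thesis using pR zR by auto
      next
        case False
        then have "q \<in> R" using q unfolding B'_def by auto
        then show ?thesis using pR pq orth unfolding R_def by auto
      qed
    qed
  qed
  have anB': "\<forall>x\<in>B'. d x x \<noteq> 0"
    using dvv dww t abt orthb_aniso[OF B] unfolding B'_def R_def by auto
  have indB': "independent B'" by (rule orth_indep[OF orthB' anB'])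
  have fB: "finite B" and cB: "card B = dim (UNIV::'v set)" using orthb_card[OF B] by auto
  have "card R = card B - 2"
    unfolding R_def using fB e by (subst card_Diff_subset) auto
  moreover have "card B \<ge> 2"
  proof -
    have "card {e1, e2} \<le> card B" using fB e by (intro card_mono) auto
    then show ?thesis using e by simp
  qed
  moreover have "card B' = card R + 2"
    unfolding B'_def using vR wR vw fB unfolding R_def by simp
  ultimately have cB': "card B' = card B" by simp
  have "UNIV \<subseteq> span B'"
    by (rule card_ge_dim_independent) (use indB' cB cB' in auto)
  then have "orthb B'" unfolding orthb_def using indB' orthB' by auto
  then have "orthb (insert v (insert w (B - {e1, e2})))" unfolding B'_def R_def .
  then show ?thesis
    using vR wR vw dvv dww unfolding R_def a_def b_def by blast
qed


lemma two_elems: assumes "finite S" "2 \<le> card S" obtains e1 e2 where "e1 \<in> S" "e2 \<in> S" "e1 \<noteq> e2"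
proof -
  from assms have "S \<noteq> {}" by auto
  then obtain e1 where e1: "e1 \<in> S" by auto
  have "card (S - {e1}) \<ge> 1" using assms e1 by simp
  then have "S - {e1} \<noteq> {}" by (metis card.empty not_one_le_zero)
  then obtain e2 where "e2 \<in> S - {e1}" by auto
  then show ?thesis using that e1 by auto
qed

lemma swap_nsq:
  assumes B: "orthb B" and e: "e1 \<in> B" "e2 \<in> B" "e1 \<noteq> e2" and t: "t \<noteq> 0"
  obtains B' where "orthb B'"
    "nsq B' + (if is_square (d e1 e1) then 0 else 1) + (if is_square (d e2 e2) then 0 else 1)
     = nsq B + (if is_square t then 0 else 1) + (if is_square (d e1 e1 * d e2 e2 * t) then 0 else 1)"
proof -
  from swap[OF assms] obtain v w where vw: "orthb (insert v (insert w (B - {e1, e2})))"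
    "v \<notin> B - {e1, e2}" "w \<notin> B - {e1, e2}" "v \<noteq> w" "d v v = t" "d w w = d e1 e1 * d e2 e2 * t"
    by blast
  define R where "R = B - {e1, e2}"
  have fB: "finite B" using orthb_card[OF B] by auto
  have fR: "finite R" using fB unfolding R_def by auto
  have 1: "nsq (insert v (insert w R)) = nsq R + (if is_square t then 0 else 1)
      + (if is_square (d e1 e1 * d e2 e2 * t) then 0 else 1)"
    using nsq_insert[of "insert w R" v] nsq_insert[of R w] fR vw unfolding R_def[symmetric] by simp
  have BB: "B = insert e1 (insert e2 R)" using e unfolding R_def by auto
  have 2: "nsq B = nsq R + (if is_square (d e1 e1) then 0 else 1) + (if is_square (d e2 e2) then 0 else 1)"
    unfolding BB using nsq_insert[of "insert e2 R" e1] nsq_insert[of R e2] fR e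
    unfolding R_def by simp
  show ?thesis
    by (rule that[of "insert v (insert w R)"]) (use vw 1 2 in \<open>auto simp: R_def\<close>)
qed

lemma up:
  assumes B: "orthb B" and le: "nsq B + 2 \<le> card B" and om: "\<not> is_square (\<omega>::'a)"
  shows "\<exists>B'. orthb B' \<and> nsq B' = nsq B + 2"
proof -
  have fB: "finite B" using orthb_card[OF B] by auto
  let ?S = "{x\<in>B. is_square (d x x)}"
  have "card B = card ?S + nsq B"
    unfolding nsq_def using fB by (subst card_Un_disjoint[symmetric]) (auto intro: arg_cong[of _ _ card])
  then have "2 \<le> card ?S" using le by simp
  then obtain e1 e2 where e: "e1 \<in> ?S" "e2 \<in> ?S" "e1 \<noteq> e2" using two_elems[of ?S] fB by auto
  have om0: "\<omega> \<noteq> 0" using om unfolding is_square_def by auto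
  obtain B' where B': "orthb B'" and eq:
    "nsq B' + (if is_square (d e1 e1) then 0 else 1) + (if is_square (d e2 e2) then 0 else 1)
     = nsq B + (if is_square \<omega> then 0 else 1) + (if is_square (d e1 e1 * d e2 e2 * \<omega>) then 0 else 1)"
    using swap_nsq[OF B _ _ e(3) om0] e by auto
  have a0: "d e1 e1 \<noteq> 0" "d e2 e2 \<noteq> 0" using orthb_aniso[OF B] e by auto
  have "is_square (d e1 e1 * d e2 e2)" using sq_mult_iff[OF two a0] e by auto
  then have "\<not> is_square (d e1 e1 * d e2 e2 * \<omega>)" using sq_mult_iff[OF two _ om0, of "d e1 e1 * d e2 e2"] a0 om by auto
  then have "nsq B' = nsq B + 2" using eq e om by auto
  then show ?thesis using B' by blast
qed

lemma down:
  assumes B: "orthb B" and le: "2 \<le> nsq B"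
  shows "\<exists>B'. orthb B' \<and> nsq B' + 2 = nsq B"
proof -
  have fB: "finite B" using orthb_card[OF B] by auto
  let ?S = "{x\<in>B. \<not> is_square (d x x)}"
  have "2 \<le> card ?S" using le unfolding nsq_def by simp
  then obtain e1 e2 where e: "e1 \<in> ?S" "e2 \<in> ?S" "e1 \<noteq> e2" using two_elems[of ?S] fB by auto
  obtain B' where B': "orthb B'" and eq:
    "nsq B' + (if is_square (d e1 e1) then 0 else 1) + (if is_square (d e2 e2) then 0 else 1)
     = nsq B + (if is_square (1::'a) then 0 else 1) + (if is_square (d e1 e1 * d e2 e2 * 1) then 0 else 1)"
    using swap_nsq[OF B _ _ e(3), of 1] e by auto
  have "is_square (d e1 e1 * d e2 e2)" using nonsq_mult_nonsq[OF two] e by auto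
  moreover have "is_square (1::'a)" unfolding is_square_def by (intro exI[of _ 1]) simp
  ultimately have "nsq B' + 2 = nsq B" using eq e by auto
  then show ?thesis using B' by blast
qed

lemma up_iter:
  assumes om: "\<not> is_square (\<omega>::'a)"
  shows "orthb B \<Longrightarrow> nsq B + 2 * k \<le> dim (UNIV::'v set) \<Longrightarrow> \<exists>B'. orthb B' \<and> nsq B' = nsq B + 2 * k"
proof (induction k)
  case 0 then show ?case by auto
next
  case (Suc k)
  then obtain B1 where B1: "orthb B1" "nsq B1 = nsq B + 2 * k" by auto
  have "nsq B1 + 2 \<le> card B1" using B1 Suc.prems orthb_card[OF B1(1)] by simp
  from up[OF B1(1) this om] show ?case using B1 by auto
qed

lemma down_iter:
  shows "orthb B \<Longrightarrow> 2 * k \<le> nsq B \<Longrightarrow> \<exists>B'. orthb B' \<and> nsq B' + 2 * k = nsq B"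
proof (induction k)
  case 0 then show ?case by auto
next
  case (Suc k)
  then obtain B1 where B1: "orthb B1" "nsq B1 + 2 * k = nsq B" by auto
  have "2 \<le> nsq B1" using B1 Suc.prems by simp
  from down[OF B1(1) this] show ?case using B1 by auto
qed

lemma reach:
  assumes om: "\<not> is_square (\<omega>::'a)" and B: "orthb B" and s: "s \<le> dim (UNIV::'v set)"
    and par: "even s = even (nsq B)"
  shows "\<exists>B'. orthb B' \<and> nsq B' = s"
proof (cases "nsq B \<le> s")
  case True
  then obtain k where k: "s = nsq B + 2 * k" using par
    by (metis dvd_def le_add_diff_inverse even_add)
  show ?thesis using up_iter[OF om B, of k] k s by auto
next
  case False
  then obtain k where k: "nsq B = s + 2 * k" using par
    by (metis dvd_def le_add_diff_inverse even_add nat_le_linear)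
  show ?thesis using down_iter[OF B, of k] k by auto
qed


lemma dsum1: "d (\<Sum>i\<in>A. f i) y = (\<Sum>i\<in>A. d (f i) y)"
  by (induction A rule: infinite_finite_induct) auto
lemma dsum2: "d y (\<Sum>i\<in>A. f i) = (\<Sum>i\<in>A. d y (f i))"
  by (induction A rule: infinite_finite_induct) auto

lemma sum_distinct_nth: "distinct xs \<Longrightarrow> (\<Sum>x\<in>set xs. f x) = (\<Sum>i<length xs. f (xs ! i))"
  by (metis bij_betw_nth sum.reindex_bij_betw)
lemma prod_distinct_nth: "distinct xs \<Longrightarrow> (\<Prod>x\<in>set xs. f x) = (\<Prod>i=0..<length xs. f (xs ! i))"
  by (metis atLeast0LessThan bij_betw_nth prod.reindex_bij_betw)

lemma gram_change:
  assumes bs: "distinct bs" "independent (set bs)" "span (set bs) = UNIV"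
    and B: "orthb B"
  shows "\<exists>u. (\<Prod>x\<in>B. d x x) = gram_det d bs * u^2"
proof -
  define n where "n = length bs"
  obtain cs where cs: "distinct cs" "set cs = B" using finite_distinct_list orthb_card[OF B] by blast
  have "card (set bs) = dim (UNIV::'v set)" using basis_card_eq_dim[of "set bs" UNIV] bs by auto
  then have ln: "length cs = n" using cs orthb_card[OF B] distinct_card[OF bs(1)] distinct_card[OF cs(1)]
    unfolding n_def by simp
  define r where "r j i = representation (set bs) (cs ! j) (bs ! i)" for j i
  have rep: "cs ! j = (\<Sum>i<n. scale (r j i) (bs ! i))" for j
  proof -
    have "cs ! j = (\<Sum>b\<in>set bs. scale (representation (set bs) (cs ! j) b) b)"
      using sum_representation_eq[of "set bs" "cs ! j" "set bs"] bs by simp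
    also have "\<dots> = (\<Sum>i<n. scale (r j i) (bs ! i))"
      unfolding r_def n_def by (rule sum_distinct_nth[OF bs(1)])
    finally show ?thesis .
  qed
  define P where "P = mat n n (\<lambda>(i, j). r j i)"
  define G where "G = mat n n (\<lambda>(i, j). d (bs ! i) (bs ! j))"
  define G' where "G' = mat n n (\<lambda>(i, j). d (cs ! i) (cs ! j))"
  have PC: "P \<in> carrier_mat n n" "G \<in> carrier_mat n n" "G' \<in> carrier_mat n n"
    "transpose_mat P \<in> carrier_mat n n" unfolding P_def G_def G'_def by auto
  have entry: "d (cs ! j) (cs ! l) = (\<Sum>m<n. (\<Sum>i<n. r j i * d (bs ! i) (bs ! m)) * r l m)" for j l
    unfolding rep[of j] rep[of l] dsum1 dsum2
    by (simp add: sum_distrib_left sum_distrib_right algebra_simps)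
  have GG: "G' = transpose_mat P * G * P"
  proof (rule eq_matI)
    fix j l assume jl: "j < dim_row (transpose_mat P * G * P)" "l < dim_col (transpose_mat P * G * P)"
    then have j: "j < n" and l: "l < n" using PC by auto
    show "G' $$ (j, l) = (transpose_mat P * G * P) $$ (j, l)"
      using j l PC unfolding G'_def entry
      by (simp add: scalar_prod_def P_def G_def atLeast0LessThan)
  qed (use PC in auto)
  have "det G' = det (transpose_mat P) * det G * det P"
    unfolding GG using PC by (simp add: det_mult[of _ n])
  then have dG': "det G' = gram_det d bs * (det P)^2"
    using PC det_transpose[of P n] unfolding gram_det_def G_def n_def
    by (simp add: power2_eq_square)
  have "upper_triangular G'"
  proof -
    have "d (cs ! i) (cs ! j) = 0" if "j < i" "i < n" for i j
    proof -
      have "cs ! i \<noteq> cs ! j" using cs(1) that ln by (simp add: nth_eq_iff_index_eq)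
      moreover have "cs ! i \<in> B" "cs ! j \<in> B" using cs(2) that ln by auto
      ultimately show ?thesis using B unfolding orthb_def by auto
    qed
    then show ?thesis unfolding upper_triangular_def G'_def by auto
  qed
  then have "det G' = (\<Prod>i=0..<n. d (cs ! i) (cs ! i))"
    using det_upper_triangular[of G' n] PC by (simp add: prod_list_diag_prod G'_def)
  also have "\<dots> = (\<Prod>x\<in>B. d x x)" using prod_distinct_nth[OF cs(1), of "\<lambda>x. d x x"] cs(2) ln by simp
  finally show ?thesis using dG' by (intro exI[of _ "det P"]) simp
qed


lemma parity:
  assumes bs: "distinct bs" "independent (set bs)" "span (set bs) = UNIV"
    and gd: "gram_det d bs = \<omega>^c * t^2" and t: "t \<noteq> 0" and om: "\<not> is_square \<omega>"
    and c: "c \<in> {0, 1::nat}" and B: "orthb B"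
  shows "even (nsq B) \<longleftrightarrow> c = 0"
proof -
  obtain u where u: "(\<Prod>x\<in>B. d x x) = gram_det d bs * u^2" using gram_change[OF bs B] by blast
  have fB: "finite B" using orthb_card[OF B] by auto
  have nz: "\<forall>x\<in>B. d x x \<noteq> 0" using orthb_aniso[OF B] by auto
  then have p0: "(\<Prod>x\<in>B. d x x) \<noteq> 0" using fB by simp
  have pe: "(\<Prod>x\<in>B. d x x) = \<omega>^c * (t * u)^2" using u gd by (simp add: power_mult_distrib)
  then have tu: "t * u \<noteq> 0" using p0 by auto
  have sqtu: "is_square ((t * u)^2)" unfolding is_square_def by blast
  have om0: "\<omega> \<noteq> 0" using om unfolding is_square_def by auto
  have "is_square (\<Prod>x\<in>B. d x x) \<longleftrightarrow> c = 0"
  proof (cases "c = 0")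
    case True then show ?thesis using pe sqtu by simp
  next
    case False
    then have "c = 1" using c by auto
    then show ?thesis using pe sq_mult_iff[OF two om0, of "(t*u)^2"] tu sqtu om by simp
  qed
  then show ?thesis using prod_sq_parity[OF two fB nz] unfolding nsq_def by simp
qed

end


theorem corollary6p3:
  fixes scale :: "'a::{field,finite} \<Rightarrow> 'v::ab_group_add \<Rightarrow> 'v"
    and d :: "'v \<Rightarrow> 'v \<Rightarrow> 'a"
    and \<omega> :: 'a
    and c n :: nat
  assumes "(2::'a) \<noteq> 0"
    and "vector_space scale"
    and "\<not> is_square \<omega>"
    and "bilinear_form scale d" and "symmetric_form d" and "nondegenerate_form d"
    and "n = vector_space.dim scale UNIV"
    and "c \<in> {0, 1}"
    and "disc_is scale d (\<omega> ^ c)"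
  shows "{address scale d B | B. orthogonal_basis scale d B}
           = {(n - (c + 2 * k), c + 2 * k) | k. c + 2 * k \<le> n}
       \<and> card {address scale d B | B. orthogonal_basis scale d B} = 1 + (n - c) div 2"
proof -
  from assms(9) obtain bs t where bs: "is_basis_list scale bs" and t: "t \<noteq> 0"
    and gd: "gram_det d bs = \<omega>^c * t^2"
    unfolding disc_is_def by blast
  interpret vector_space scale by (rule assms(2))
  have bs': "distinct bs" "independent (set bs)" "span (set bs) = UNIV"
    using bs unfolding is_basis_list_def by auto
  interpret ofq scale "set bs" d
  proof (intro ofq.intro finite_dimensional_vector_space.intro ofq_axioms.intro
      finite_dimensional_vector_space_axioms.intro)
    show "vector_space scale" by (rule assms(2))
    show "finite (set bs)" by simp
    show "independent (set bs)" by (rule bs'(2))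
    show "span (set bs) = UNIV" by (rule bs'(3))
  qed (use assms in auto)
  have ob: "orthogonal_basis scale d B \<longleftrightarrow> orthb B" for B
    unfolding orthogonal_basis_def orthb_def by simp
  have ad: "address scale d B = (n - nsq B, nsq B)" for B
    unfolding address_def nsq_def assms(7) Let_def by simp
  have nle: "orthb B \<Longrightarrow> nsq B \<le> n" for B
    using nsq_le orthb_card assms(7) by metis
  have par: "orthb B \<Longrightarrow> even (nsq B) \<longleftrightarrow> c = 0" for B
    by (rule parity[OF bs' gd t assms(3) assms(8)])
  obtain B0 where B0: "orthb B0" using orthb_exists by blast
  have cn: "c \<le> n"
  proof (cases "c = 0")
    case False
    then have "odd (nsq B0)" using par[OF B0] by simp
    then have "1 \<le> nsq B0" by (cases "nsq B0") auto
    then show ?thesis using nle[OF B0] False assms(8) by auto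
  qed simp
  have eq: "{address scale d B | B. orthogonal_basis scale d B}
           = {(n - (c + 2 * k), c + 2 * k) | k. c + 2 * k \<le> n}"
  proof (intro equalityI subsetI)
    fix p assume "p \<in> {address scale d B | B. orthogonal_basis scale d B}"
    then obtain B where "orthogonal_basis scale d B" and p: "p = address scale d B" by blast
    then have B: "orthb B" using ob by simp
    have "c \<le> nsq B"
    proof (cases "c = 0")
      case False
      then have "odd (nsq B)" using par[OF B] by simp
      then have "1 \<le> nsq B" by (cases "nsq B") auto
      then show ?thesis using False assms(8) by auto
    qed simp
    moreover have "even (nsq B - c)" using par[OF B] assms(8) \<open>c \<le> nsq B\<close> by auto
    ultimately have "nsq B = c + 2 * ((nsq B - c) div 2)" by auto
    then have "p = (n - (c + 2 * ((nsq B - c) div 2)), c + 2 * ((nsq B - c) div 2))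
         \<and> c + 2 * ((nsq B - c) div 2) \<le> n"
      using p ad nle[OF B] by metis
    then show "p \<in> {(n - (c + 2 * k), c + 2 * k) | k. c + 2 * k \<le> n}" by blast
  next
    fix p assume "p \<in> {(n - (c + 2 * k), c + 2 * k) | k. c + 2 * k \<le> n}"
    then obtain k where k: "c + 2 * k \<le> n" and p: "p = (n - (c + 2 * k), c + 2 * k)" by blast
    have "even (c + 2*k) \<longleftrightarrow> even (nsq B0)" using par[OF B0] assms(8) by auto
    then obtain B where B: "orthb B" "nsq B = c + 2 * k"
      using reach[OF assms(3) B0, of "c + 2*k"] k assms(7) by auto
    have "p = address scale d B" using p ad B by simp
    moreover have "orthogonal_basis scale d B" using ob B by simp
    ultimately show "p \<in> {address scale d B | B. orthogonal_basis scale d B}" by blast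
  qed
  have "{(n - (c + 2 * k), c + 2 * k) | k. c + 2 * k \<le> n} =
        (\<lambda>k. (n - (c + 2 * k), c + 2 * k)) ` {..(n - c) div 2}"
    using cn by auto
  moreover have "card ((\<lambda>k. (n - (c + 2 * k), c + 2 * k)) ` {..(n - c) div 2}) = 1 + (n - c) div 2"
    by (subst card_image) (auto simp: inj_on_def)
  ultimately show ?thesis using eq by simp
qed

end
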